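(* Consider the system $\Sigma$: $x_{t+1}=f_u(x_t)$ with a finite control set $\mathcal{U}$, and let $\mathcal{X}\subseteq\mathbb{R}^n$ and $\Omega\subseteq\mathcal{X}$ be compact. Suppose $\varphi(\Omega)$ is $\delta$-robustly realizable for $\Sigma$, and that there exist $\rho>0$ and inclusion functions $[f_u]$ of $f_u$ ($u\in\mathcal{U}$) with $\mathrm{wid}([f_u]([x]))\le\rho\,\mathrm{wid}([x])$ for all boxes $[x]\subseteq\mathcal{X}$ and all $u\in\mathcal{U}$. For $\varepsilon>0$ let $Y^\varepsilon$ be the interval part of the output $K$ of Algorithm 3 run with inputs $\Omega,\mathcal{X},\{[f_u]\}_{u\in\mathcal{U}},\varepsilon$. Then Algorithm 3 terminates in finitely many steps, and if $\rho\varepsilon\le\delta$ then $$\mathrm{Win}^\delta_\Sigma(\varphi(\Omega))\subseteq Y^\varepsilon\subseteq\mathrm{Win}_\Sigma(\varphi(\Omega)).$$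
   Context: For $\delta\ge0$, $\Sigma^\delta$ has transitions $x_{t+1}=f_{u_t}(x_t)+d_t$, $u_t\in\mathcal{U}$, $|d_t|\le\delta$ ($|\cdot|$ infinity norm), $f_u$ continuous; $\Sigma=\Sigma^0$. A solution is an infinite sequence of states in $\mathcal{X}$ obeying these transitions. A solution satisfies $\varphi(\Omega)$ if it is in $\Omega$ from some time on. A memoryless strategy is $\kappa:\mathbb{R}^n\to2^{\mathcal{U}}$; a control sequence conforms to it if $u_k\in\kappa(x_k)$ for all $k$. $\mathrm{Win}^\delta_\Sigma(\varphi(\Omega))$ is the set of $x_0\in\mathcal{X}$ for which some memoryless $\kappa$ makes every solution of $\Sigma^\delta$ from $x_0$ with control conforming to $\kappa$ (and any disturbances) satisfy $\varphi(\Omega)$; $\mathrm{Win}_\Sigma=\mathrm{Win}^0_\Sigma$. $\varphi(\Omega)$ is $\delta$-robustly realizable if $\mathrm{Win}^\delta_\Sigma(\varphi(\Omega))\ne\emptyset$. $\mathrm{Pre}(Y)=\{x\in\mathcal{X}:\exists u,\ f_u(x)\in Y\}$. Boxes, width and inclusion functions: a box is a product of compact intervals, $\mathrm{wid}$ its maximal side length; $[f]$ is an inclusion function of $f$ if $f([x])\subseteq[f]([x])$ and $\mathrm{wid}([f]([x]))\to0$ as $\mathrm{wid}([x])\to0$. Sets are represented as finite unions (lists) of boxes. $\textsc{CPred}(\{[f_u]\},X,Y,\varepsilon)$: start with $K=\underline{X}=\Delta X=X_c=\emptyset$ and a list of the boxes of $X$; repeatedly remove a box $[x]$: if $[f_u]([x])\cap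 Y=\emptyset$ for all $u$, add it to $X_c$; else if $[f_u]([x])\subseteq Y$ for some $u$, add $[x]$ to $\underline{X}$ and $([x],u)$ to $K$; else if $\mathrm{wid}([x])<\varepsilon$ add it to $\Delta X$; else bisect it at the midpoint of a coordinate of maximal side length and put both halves in the list. Return $(K,\underline{X},\Delta X,X_c)$. Algorithm 3 (inputs $\Omega,\mathcal{X},\{[f_u]\},\varepsilon$): $K\leftarrow\emptyset$; $\widetilde{Y}\leftarrow\emptyset$, $Y\leftarrow\mathcal{X}$; $G_1\leftarrow\mathcal{X}\setminus\Omega$, $G_2\leftarrow\mathcal{X}\cap\Omega$. While $\widetilde{Y}\ne Y$: $Y\leftarrow\widetilde{Y}$; $(K_z,\underline{Z},\Delta Z,Z_c)\leftarrow\textsc{CPred}(\{[f_u]\},G_1,Y,\varepsilon)$; $K\leftarrow K\cup K_z$; $Z\leftarrow Y\cup\underline{Z}$; $X\leftarrow\emptyset$, $\widetilde{X}\leftarrow Z\cup G_2$, $V\leftarrow G_2$, $G_2\leftarrow\emptyset$; while $\widetilde{X}\ne X$: {$X\leftarrow\widetilde{X}$; $(K_v,\underline{V},\Delta V,V_c)\leftarrow\textsc{CPred}(\{[f_u]\},V,X,\varepsilon)$; $\widetilde{X}\leftarrow Z\cup\underline{V}$; $V\leftarrow\underline{V}$; $G_2\leftarrow G_2\cup\Delta V\cup V_c$}; $K\leftarrow K\cup K_v$; $\widetilde{Y}\leftarrow X$; $G_1\leftarrow\Delta Z\cup Z_c$. Return $K$. The interval part of $K$ is the union of all boxes $[x]$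 occurring in pairs $([x],u)\in K$. *)

theory Defs
  imports "HOL-Analysis.Analysis"
begin

text \<open>A box in R^n is represented by its lower and upper corner.\<close>
type_synonym 'n box = "(real^'n) \<times> (real^'n)"

definition box_set :: "'n::finite box \<Rightarrow> (real^'n) set" where
  "box_set B = {x. \<forall>i. fst B $ i \<le> x $ i \<and> x $ i \<le> snd B $ i}"

definition valid_box :: "'n::finite box \<Rightarrow> bool" where
  "valid_box B \<longleftrightarrow> (\<forall>i. fst B $ i \<le> snd B $ i)"

definition wid :: "'n::finite box \<Rightarrow> real" where
  "wid B = Max (range (\<lambda>i. snd B $ i - fst B $ i))"

definition boxes_set :: "'n::finite box list \<Rightarrow> (real^'n) set" where
  "boxes_set L = \<Union> (box_set ` set L)"

definition is_inclusion_fun ::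
  "(real^'n::finite) set \<Rightarrow> (real^'n \<Rightarrow> real^'n) \<Rightarrow> ('n box \<Rightarrow> 'n box) \<Rightarrow> bool" where
  "is_inclusion_fun D f F \<longleftrightarrow>
     (\<forall>B. valid_box B \<and> box_set B \<subseteq> D \<longrightarrow> valid_box (F B) \<and> f ` box_set B \<subseteq> box_set (F B)) \<and>
     (\<forall>Bs. (\<forall>k. valid_box (Bs k) \<and> box_set (Bs k) \<subseteq> D) \<and> (\<lambda>k. wid (Bs k)) \<longlonglongrightarrow> 0
            \<longrightarrow> (\<lambda>k. wid (F (Bs k))) \<longlonglongrightarrow> 0)"

definition split_coord :: "'n::finite box \<Rightarrow> 'n" where
  "split_coord B = (SOME i. \<forall>j. snd B $ j - fst B $ j \<le> snd B $ i - fst B $ i)"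

definition bisect :: "'n::finite box \<Rightarrow> 'n box \<times> 'n box" where
  "bisect B = (let i = split_coord B; m = (fst B $ i + snd B $ i) / 2 in
     ((fst B, \<chi> j. if j = i then m else snd B $ j),
      (\<chi> j. if j = i then m else fst B $ j, snd B)))"

partial_function (option) cpred_loop ::
  "'u set \<Rightarrow> ('u \<Rightarrow> 'n::finite box \<Rightarrow> 'n box) \<Rightarrow> (real^'n) set \<Rightarrow> real \<Rightarrow> 'n box list \<Rightarrow>
   (('n box \<times> 'u) list \<times> 'n box list \<times> 'n box list \<times> 'n box list) \<Rightarrow>
   (('n box \<times> 'u) list \<times> 'n box list \<times> 'n box list \<times> 'n box list) option"
where
  "cpred_loop U F Y eps L acc =
    (case L of
       [] \<Rightarrow> Some acc
     | B # L' \<Rightarrow>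
        (case acc of (K, Xu, DX, Xc) \<Rightarrow>
          if (\<forall>u\<in>U. box_set (F u B) \<inter> Y = {}) then
            cpred_loop U F Y eps L' (K, Xu, DX, Xc @ [B])
          else if (\<exists>u\<in>U. box_set (F u B) \<subseteq> Y) then
            cpred_loop U F Y eps L'
              (K @ [(B, SOME u. u \<in> U \<and> box_set (F u B) \<subseteq> Y)], Xu @ [B], DX, Xc)
          else if wid B < eps then
            cpred_loop U F Y eps L' (K, Xu, DX @ [B], Xc)
          else
            cpred_loop U F Y eps (fst (bisect B) # snd (bisect B) # L') acc))"

text \<open>CPred({[f_u]}, X, Y, eps) returns (K, X_under, Delta X, X_c).\<close>
definition cpred ::
  "'u set \<Rightarrow> ('u \<Rightarrow> 'n::finite box \<Rightarrow> 'n box) \<Rightarrow> 'n box list \<Rightarrow> (real^'n) set \<Rightarrow> real \<Rightarrow>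
   (('n box \<times> 'u) list \<times> 'n box list \<times> 'n box list \<times> 'n box list) option" where
  "cpred U F X Y eps = cpred_loop U F Y eps X ([], [], [], [])"

text \<open>Inner loop; state: Z, X (set), X-tilde, V, G2, K_v. Returns (X, G2, K_v).\<close>
partial_function (option) alg3_inner ::
  "'u set \<Rightarrow> ('u \<Rightarrow> 'n::finite box \<Rightarrow> 'n box) \<Rightarrow> real \<Rightarrow> 'n box list \<Rightarrow> (real^'n) set \<Rightarrow>
   'n box list \<Rightarrow> 'n box list \<Rightarrow> 'n box list \<Rightarrow> ('n box \<times> 'u) list \<Rightarrow>
   ('n box list \<times> 'n box list \<times> ('n box \<times> 'u) list) option"
where
  "alg3_inner U F eps Z X Xt V G2 Kv =
    (if boxes_set Xt = X then Some (Xt, G2, Kv)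
     else Option.bind (cpred U F V (boxes_set Xt) eps)
       (\<lambda>r. case r of (Kv', Vu, DV, Vc) \<Rightarrow>
          alg3_inner U F eps Z (boxes_set Xt) (Z @ Vu) Vu (G2 @ DV @ Vc) Kv'))"

text \<open>Outer loop; state: Y (set), Y-tilde, G1, G2, K.\<close>
partial_function (option) alg3_outer ::
  "'u set \<Rightarrow> ('u \<Rightarrow> 'n::finite box \<Rightarrow> 'n box) \<Rightarrow> real \<Rightarrow> (real^'n) set \<Rightarrow> 'n box list \<Rightarrow>
   'n box list \<Rightarrow> 'n box list \<Rightarrow> ('n box \<times> 'u) list \<Rightarrow> ('n box \<times> 'u) list option"
where
  "alg3_outer U F eps Y Yt G1 G2 K =
    (if boxes_set Yt = Y then Some K
     else Option.bind (cpred U F G1 (boxes_set Yt) eps)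
       (\<lambda>r. case r of (Kz, Zu, DZ, Zc) \<Rightarrow>
          Option.bind (alg3_inner U F eps (Yt @ Zu) {} ((Yt @ Zu) @ G2) G2 [] [])
            (\<lambda>s. case s of (X, G2', Kv) \<Rightarrow>
               alg3_outer U F eps (boxes_set Yt) X (DZ @ Zc) G2' (K @ Kz @ Kv))))"

text \<open>Algorithm 3: G1 and G2 are the box-list representations of X \ Omega and X \<inter> Omega;
  Y is initialised to the state space XX and Y-tilde to the empty list.
  Result None = non-termination.\<close>
definition algorithm3 ::
  "'u set \<Rightarrow> ('u \<Rightarrow> 'n::finite box \<Rightarrow> 'n box) \<Rightarrow> real \<Rightarrow> (real^'n) set \<Rightarrow> 'n box list \<Rightarrow> 'n box list \<Rightarrow>
   ('n box \<times> 'u) list option" where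
  "algorithm3 U F eps XX G1 G2 = alg3_outer U F eps XX [] G1 G2 []"

definition interval_part :: "('n::finite box \<times> 'u) list \<Rightarrow> (real^'n) set" where
  "interval_part K = \<Union> ((\<lambda>p. box_set (fst p)) ` set K)"

text \<open>A length-k prefix of a solution of Sigma^delta from x0 conforming to kappa
  (x_{j+1} = f_u(x_j) + d_j with u in kappa(x_j), infnorm d_j <= delta).\<close>
definition prefix_run ::
  "real \<Rightarrow> ('u \<Rightarrow> real^'n::finite \<Rightarrow> real^'n) \<Rightarrow> (real^'n \<Rightarrow> 'u set) \<Rightarrow> real^'n \<Rightarrow>
   (nat \<Rightarrow> real^'n) \<Rightarrow> nat \<Rightarrow> bool" where
  "prefix_run \<delta> f \<kappa> x0 xs k \<longleftrightarrow> xs 0 = x0 \<and>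
     (\<forall>j<k. \<exists>u\<in>\<kappa> (xs j). infnorm (xs (Suc j) - f u (xs j)) \<le> \<delta>)"

definition winning_strategy ::
  "real \<Rightarrow> 'u set \<Rightarrow> ('u \<Rightarrow> real^'n::finite \<Rightarrow> real^'n) \<Rightarrow> (real^'n) set \<Rightarrow> (real^'n) set \<Rightarrow>
   (real^'n \<Rightarrow> 'u set) \<Rightarrow> real^'n \<Rightarrow> bool" where
  "winning_strategy \<delta> U f XX \<Omega> \<kappa> x0 \<longleftrightarrow>
     (\<forall>x. \<kappa> x \<subseteq> U) \<and>
     (\<forall>xs k. prefix_run \<delta> f \<kappa> x0 xs k \<longrightarrow> xs k \<in> XX \<and> \<kappa> (xs k) \<noteq> {}) \<and>
     (\<forall>xs. (\<forall>k. prefix_run \<delta> f \<kappa> x0 xs k) \<longrightarrow> (\<exists>N. \<forall>k\<ge>N. xs k \<in> \<Omega>))"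

definition Win ::
  "real \<Rightarrow> 'u set \<Rightarrow> ('u \<Rightarrow> real^'n::finite \<Rightarrow> real^'n) \<Rightarrow> (real^'n) set \<Rightarrow> (real^'n) set \<Rightarrow>
   (real^'n) set" where
  "Win \<delta> U f XX \<Omega> = {x0 \<in> XX. \<exists>\<kappa>. winning_strategy \<delta> U f XX \<Omega> \<kappa> x0}"

end

theory Submission
  imports Defs
begin



lemma infnorm_le_cart:
  fixes x :: "real^'n"
  assumes "\<And>i. \<bar>x$i\<bar> \<le> c"
  shows "infnorm x \<le> c"
  unfolding infnorm_cart
  by (rule cSup_least) (auto intro: assms)

definition side :: "'n::finite box \<Rightarrow> 'n \<Rightarrow> real" where
  "side B i = snd B $ i - fst B $ i"

lemma wid_side: "wid B = Max (range (side B))"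
  unfolding wid_def side_def by (simp add: comp_def)

lemma side_le_wid: "side B i \<le> wid B"
  unfolding wid_side by (rule Max_ge) auto

lemma split_coord_max: "side B j \<le> side B (split_coord B)"
proof -
  have "\<exists>i. \<forall>j. snd B $ j - fst B $ j \<le> snd B $ i - fst B $ i"
  proof -
    have "Max (range (side B)) \<in> range (side B)" by (rule Max_in) auto
    then obtain i where "side B i = Max (range (side B))" by (metis rangeE)
    then show ?thesis using side_le_wid unfolding wid_side side_def by metis
  qed
  from someI_ex[OF this] show ?thesis unfolding split_coord_def side_def by blast
qed

lemma wid_split: "wid B = side B (split_coord B)"
  unfolding wid_side
  by (rule Max_eqI) (auto intro: split_coord_max)

lemma valid_wid: "valid_box B \<Longrightarrow> 0 \<le> wid B"
  using side_le_wid[of B undefined] unfolding valid_box_def side_def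
  by (metis diff_ge_0_iff_ge order_trans)

lemma bisect_fst_side:
  "side (fst (bisect B)) j = (if j = split_coord B then side B j / 2 else side B j)"
  unfolding bisect_def side_def Let_def by auto

lemma bisect_snd_side:
  "side (snd (bisect B)) j = (if j = split_coord B then side B j / 2 else side B j)"
  unfolding bisect_def side_def Let_def by (auto simp: field_simps)

lemma bisect_valid:
  assumes "valid_box B"
  shows "valid_box (fst (bisect B))" "valid_box (snd (bisect B))"
  using assms unfolding bisect_def valid_box_def Let_def by auto

lemma bisect_union:
  assumes "valid_box B"
  shows "box_set B = box_set (fst (bisect B)) \<union> box_set (snd (bisect B))"
proof -
  let ?i = "split_coord B"
  let ?m = "(fst B $ ?i + snd B $ ?i) / 2"
  show ?thesis
  proof (rule set_eqI, rule iffI)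
    fix x assume x: "x \<in> box_set B"
    show "x \<in> box_set (fst (bisect B)) \<union> box_set (snd (bisect B))"
    proof (cases "x $ ?i \<le> ?m")
      case True
      then have "x \<in> box_set (fst (bisect B))"
        using x unfolding bisect_def box_set_def Let_def by auto
      then show ?thesis by blast
    next
      case False
      then have "x \<in> box_set (snd (bisect B))"
        using x unfolding bisect_def box_set_def Let_def by auto
      then show ?thesis by blast
    qed
  next
    fix x assume "x \<in> box_set (fst (bisect B)) \<union> box_set (snd (bisect B))"
    then show "x \<in> box_set B"
      using assms unfolding bisect_def box_set_def valid_box_def Let_def
      by (auto split: if_splits) (smt (verit))+
  qed
qed

lemma bisect_sub:
  assumes "valid_box B"
  shows "box_set (fst (bisect B)) \<subseteq> box_set B" "box_set (snd (bisect B)) \<subseteq> box_set B"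
  using bisect_union[OF assms] by auto


definition cnt :: "real \<Rightarrow> real \<Rightarrow> nat" where
  "cnt eps s = (LEAST n. s < eps * 2 ^ n)"

lemma cnt_ex: fixes eps s :: real assumes e: "eps > 0" shows "\<exists>n. s < eps * 2 ^ n"
proof -
  obtain n where "s / eps < 2 ^ n" using real_arch_pow[of 2 "s/eps"] by auto
  then have "s < 2 ^ n * eps" using e by (simp add: pos_divide_less_eq)
  then show ?thesis by (auto simp: mult.commute)
qed

lemma cnt_half:
  assumes e: "eps > 0" and s: "eps \<le> s"
  shows "cnt eps (s / 2) < cnt eps s"
proof -
  define n where "n = cnt eps s"
  have sn: "s < eps * 2 ^ n" unfolding n_def cnt_def by (rule LeastI_ex[OF cnt_ex[OF e]])
  have "n \<noteq> 0"
  proof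
    assume "n = 0" then show False using sn s by simp
  qed
  then obtain m where nm: "n = Suc m" by (cases n) auto
  have "s / 2 < eps * 2 ^ m" using sn nm by auto
  then have "cnt eps (s/2) \<le> m" unfolding cnt_def by (rule Least_le)
  then show ?thesis using nm n_def by auto
qed

definition phi :: "real \<Rightarrow> 'n::finite box \<Rightarrow> nat" where
  "phi eps B = (\<Sum>i\<in>UNIV. cnt eps (side B i))"

lemma phi_bisect:
  assumes e: "eps > 0" and w: "\<not> wid B < eps"
  shows "phi eps (fst (bisect B)) < phi eps B" "phi eps (snd (bisect B)) < phi eps B"
proof -
  have sc: "eps \<le> side B (split_coord B)" using w wid_split[of B] by auto
  have lt: "cnt eps (side B (split_coord B) / 2) < cnt eps (side B (split_coord B))"
    using cnt_half[OF e sc] .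
  show "phi eps (fst (bisect B)) < phi eps B" unfolding phi_def
    by (rule sum_strict_mono_ex1) (use lt in \<open>auto simp: bisect_fst_side\<close>)
  show "phi eps (snd (bisect B)) < phi eps B" unfolding phi_def
    by (rule sum_strict_mono_ex1) (use lt in \<open>auto simp: bisect_snd_side\<close>)
qed

definition mu :: "real \<Rightarrow> 'n::finite box list \<Rightarrow> nat" where
  "mu eps L = sum_list (map (\<lambda>B. (3::nat) ^ phi eps B) L)"

lemma mu_bisect:
  assumes e: "eps > 0" and w: "\<not> wid B < eps"
  shows "mu eps (fst (bisect B) # snd (bisect B) # L) < mu eps (B # L)"
proof -
  note p = phi_bisect[OF e w]
  obtain k where k: "phi eps B = Suc k" using p(1) by (cases "phi eps B") auto
  have a: "(3::nat) ^ phi eps (fst (bisect B)) \<le> 3 ^ k"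
    by (rule power_increasing) (use p k in auto)
  have b: "(3::nat) ^ phi eps (snd (bisect B)) \<le> 3 ^ k"
    by (rule power_increasing) (use p k in auto)
  have c: "(3::nat) ^ phi eps B = 3 * 3^k" using k by simp
  have "(0::nat) < 3^k" by simp
  then have "(3::nat) ^ phi eps (fst (bisect B)) + 3 ^ phi eps (snd (bisect B)) < 3 ^ phi eps B"
    using a b c by linarith
  then show ?thesis unfolding mu_def by simp
qed

definition cpred_spec where
  "cpred_spec U F Y eps P L K' Xu' DX' Xc' \<longleftrightarrow>
   map fst K' = Xu' \<and>
   (\<forall>p\<in>set K'. snd p \<in> U \<and> box_set (F (snd p) (fst p)) \<subseteq> Y) \<and>
   (\<forall>B\<in>set Xc'. \<forall>u\<in>U. box_set (F u B) \<inter> Y = {}) \<and>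
   (\<forall>B\<in>set DX'. wid B < eps \<and> (\<forall>u\<in>U. \<not> box_set (F u B) \<subseteq> Y)) \<and>
   boxes_set L = boxes_set Xu' \<union> boxes_set DX' \<union> boxes_set Xc' \<and>
   (\<forall>B\<in>set Xu' \<union> set DX' \<union> set Xc'. P B)"

lemma boxes_set_simps[simp]:
  "boxes_set [] = {}" "boxes_set (B # L) = box_set B \<union> boxes_set L"
  "boxes_set (L1 @ L2) = boxes_set L1 \<union> boxes_set L2"
  unfolding boxes_set_def by auto

lemma cpred_loop_spec:
  fixes P :: "'n::finite box \<Rightarrow> bool"
  assumes PV: "\<And>B. P B \<Longrightarrow> valid_box B"
    and PS: "\<And>B. P B \<Longrightarrow> \<not> wid B < eps \<Longrightarrow> P (fst (bisect B)) \<and> P (snd (bisect B))"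
    and eps: "eps > 0"
  shows "\<forall>B\<in>set L. P B \<Longrightarrow> \<exists>K' Xu' DX' Xc'.
     cpred_loop U F Y eps L (K, Xu, DX, Xc) = Some (K @ K', Xu @ Xu', DX @ DX', Xc @ Xc') \<and>
     cpred_spec U F Y eps P L K' Xu' DX' Xc'"
proof (induction L arbitrary: K Xu DX Xc rule: measure_induct_rule[where f="mu eps"])
  case (less L)
  show ?case
  proof (cases L)
    case Nil
    then show ?thesis by (subst cpred_loop.simps) (auto simp: cpred_spec_def)
  next
    case (Cons B L')
    have PB: "P B" and PL': "\<forall>B\<in>set L'. P B" using less.prems Cons by auto
    have mL': "mu eps L' < mu eps L" unfolding Cons mu_def by simp
    show ?thesis
    proof (cases "\<forall>u\<in>U. box_set (F u B) \<inter> Y = {}")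
      case c1: True
      from less.IH[OF mL' PL', of K Xu DX "Xc @ [B]"] obtain K' Xu' DX' Xc' where
        eq: "cpred_loop U F Y eps L' (K, Xu, DX, Xc @ [B]) = Some (K@K', Xu@Xu', DX@DX', (Xc@[B])@Xc')"
        and sp: "cpred_spec U F Y eps P L' K' Xu' DX' Xc'" by blast
      have "cpred_loop U F Y eps L (K,Xu,DX,Xc) = Some (K@K', Xu@Xu', DX@DX', Xc@(B#Xc'))"
        by (subst cpred_loop.simps) (simp add: Cons c1 eq)
      moreover have "cpred_spec U F Y eps P L K' Xu' DX' (B#Xc')"
        using sp c1 PB unfolding cpred_spec_def Cons by auto
      ultimately show ?thesis by blast
    next
      case c1: False
      show ?thesis
      proof (cases "\<exists>u\<in>U. box_set (F u B) \<subseteq> Y")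
        case c2: True
        define u0 where "u0 = (SOME u. u \<in> U \<and> box_set (F u B) \<subseteq> Y)"
        have u0: "u0 \<in> U \<and> box_set (F u0 B) \<subseteq> Y" using c2 unfolding u0_def
          by (metis (mono_tags, lifting) someI_ex)
        from less.IH[OF mL' PL', of "K @ [(B,u0)]" "Xu @ [B]" DX Xc] obtain K' Xu' DX' Xc' where
          eq: "cpred_loop U F Y eps L' (K @ [(B,u0)], Xu @ [B], DX, Xc) =
             Some ((K @ [(B,u0)])@K', (Xu @ [B])@Xu', DX@DX', Xc@Xc')"
          and sp: "cpred_spec U F Y eps P L' K' Xu' DX' Xc'" by blast
        have "cpred_loop U F Y eps L (K,Xu,DX,Xc) = Some (K@((B,u0)#K'), Xu@(B#Xu'), DX@DX', Xc@Xc')"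
          using eq by (subst cpred_loop.simps) (simp add: Cons c1 c2 u0_def)
        moreover have "cpred_spec U F Y eps P L ((B,u0)#K') (B#Xu') DX' Xc'"
          using sp u0 PB unfolding cpred_spec_def Cons by auto
        ultimately show ?thesis by blast
      next
        case c2: False
        show ?thesis
        proof (cases "wid B < eps")
          case c3: True
          from less.IH[OF mL' PL', of K Xu "DX @ [B]" Xc] obtain K' Xu' DX' Xc' where
            eq: "cpred_loop U F Y eps L' (K, Xu, DX @ [B], Xc) = Some (K@K', Xu@Xu', (DX@[B])@DX', Xc@Xc')"
            and sp: "cpred_spec U F Y eps P L' K' Xu' DX' Xc'" by blast
          have "cpred_loop U F Y eps L (K,Xu,DX,Xc) = Some (K@K', Xu@Xu', DX@(B#DX'), Xc@Xc')"
            by (subst cpred_loop.simps) (simp add: Cons c1 c2 c3 eq)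
          moreover have "cpred_spec U F Y eps P L K' Xu' (B#DX') Xc'"
            using sp c2 c3 PB unfolding cpred_spec_def Cons by auto
          ultimately show ?thesis by blast
        next
          case c3: False
          let ?L2 = "fst (bisect B) # snd (bisect B) # L'"
          have m2: "mu eps ?L2 < mu eps L" unfolding Cons by (rule mu_bisect[OF eps c3])
          have P2: "\<forall>B\<in>set ?L2. P B" using PS[OF PB c3] PL' by auto
          from less.IH[OF m2 P2, of K Xu DX Xc] obtain K' Xu' DX' Xc' where
            eq: "cpred_loop U F Y eps ?L2 (K, Xu, DX, Xc) = Some (K@K', Xu@Xu', DX@DX', Xc@Xc')"
            and sp: "cpred_spec U F Y eps P ?L2 K' Xu' DX' Xc'" by blast
          have "cpred_loop U F Y eps L (K,Xu,DX,Xc) = Some (K@K', Xu@Xu', DX@DX', Xc@Xc')"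
            by (subst cpred_loop.simps) (simp add: Cons c1 c2 c3 eq)
          moreover have "cpred_spec U F Y eps P L K' Xu' DX' Xc'"
            using sp bisect_union[OF PV[OF PB]] unfolding cpred_spec_def Cons by auto
          ultimately show ?thesis by blast
        qed
      qed
    qed
  qed
qed

lemma cpred_spec:
  fixes P :: "'n::finite box \<Rightarrow> bool"
  assumes PV: "\<And>B. P B \<Longrightarrow> valid_box B"
    and PS: "\<And>B. P B \<Longrightarrow> \<not> wid B < eps \<Longrightarrow> P (fst (bisect B)) \<and> P (snd (bisect B))"
    and eps: "eps > 0" and L: "\<forall>B\<in>set L. P B"
  shows "\<exists>K' Xu' DX' Xc'. cpred U F L Y eps = Some (K', Xu', DX', Xc') \<and>
     cpred_spec U F Y eps P L K' Xu' DX' Xc'"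
  using cpred_loop_spec[OF PV PS eps L, of U F Y "[]" "[]" "[]" "[]"] unfolding cpred_def by auto


definition ch :: "real \<Rightarrow> ('n::finite box \<times> 'n box) set" where
  "ch eps = {(B, C). \<not> wid B < eps \<and> (C = fst (bisect B) \<or> C = snd (bisect B))}"

lemma ch_unfold:
  assumes "x \<in> (ch eps)\<^sup>* `` {B}"
  shows "x = B \<or> (\<not> wid B < eps \<and> (x \<in> (ch eps)\<^sup>* `` {fst (bisect B)} \<or> x \<in> (ch eps)\<^sup>* `` {snd (bisect B)}))"
proof -
  have "(B, x) \<in> (ch eps)\<^sup>*" using assms by auto
  then show ?thesis
  proof (cases rule: converse_rtranclE)
    case base then show ?thesis by simp
  next
    case (step c)
    then show ?thesis unfolding ch_def by auto
  qed
qed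

lemma finite_desc:
  assumes e: "eps > 0"
  shows "finite ((ch eps)\<^sup>* `` {B})"
proof (induction "phi eps B" arbitrary: B rule: less_induct)
  case less
  show ?case
  proof (cases "wid B < eps")
    case True
    then have "(ch eps)\<^sup>* `` {B} \<subseteq> {B}" using ch_unfold[of _ eps B] by blast
    then show ?thesis using finite_subset by blast
  next
    case False
    have f1: "finite ((ch eps)\<^sup>* `` {fst (bisect B)})" by (rule less) (rule phi_bisect[OF e False])
    have f2: "finite ((ch eps)\<^sup>* `` {snd (bisect B)})" by (rule less) (rule phi_bisect[OF e False])
    have "(ch eps)\<^sup>* `` {B} \<subseteq> {B} \<union> (ch eps)\<^sup>* `` {fst (bisect B)} \<union> (ch eps)\<^sup>* `` {snd (bisect B)}"
      using ch_unfold[of _ eps B] by blast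
    then show ?thesis using f1 f2 finite_subset by blast
  qed
qed

lemma finite_R:
  assumes e: "eps > 0" and "finite S"
  shows "finite ((ch eps)\<^sup>* `` S)"
  unfolding Image_eq_UN[of _ S] using assms finite_desc[OF e] by auto

lemma R_split:
  assumes "B \<in> (ch eps)\<^sup>* `` S" "\<not> wid B < eps"
  shows "fst (bisect B) \<in> (ch eps)\<^sup>* `` S" "snd (bisect B) \<in> (ch eps)\<^sup>* `` S"
proof -
  obtain a where a: "a \<in> S" "(a, B) \<in> (ch eps)\<^sup>*" using assms(1) by auto
  have "(B, fst (bisect B)) \<in> ch eps" "(B, snd (bisect B)) \<in> ch eps" using assms(2) unfolding ch_def by auto
  then show "fst (bisect B) \<in> (ch eps)\<^sup>* `` S" "snd (bisect B) \<in> (ch eps)\<^sup>* `` S"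
    using a by (meson ImageI rtrancl_into_rtrancl)+
qed

lemma R_valid:
  assumes "B \<in> (ch eps)\<^sup>* `` S" "\<forall>B\<in>S. valid_box B"
  shows "valid_box B"
proof -
  obtain a where a: "a \<in> S" "(a, B) \<in> (ch eps)\<^sup>*" using assms(1) by auto
  from a(2) show ?thesis
  proof (induction rule: rtrancl_induct)
    case base then show ?case using a assms by auto
  next
    case (step y z) then show ?case unfolding ch_def using bisect_valid[of y] by auto
  qed
qed

lemma valid_nonempty: "valid_box B \<Longrightarrow> fst B \<in> box_set B"
  unfolding valid_box_def box_set_def by auto

definition rej :: "'u set \<Rightarrow> ('u \<Rightarrow> 'n::finite box \<Rightarrow> 'n box) \<Rightarrow> real \<Rightarrow> (real^'n) set \<Rightarrow>
    real^'n \<Rightarrow> (real^'n) set \<Rightarrow> bool" where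
  "rej U F eps XX p A \<longleftrightarrow> (\<exists>B. valid_box B \<and> box_set B \<subseteq> XX \<and> p \<in> box_set B \<and>
     ((\<forall>u\<in>U. box_set (F u B) \<inter> A = {}) \<or> (wid B < eps \<and> (\<forall>u\<in>U. \<not> box_set (F u B) \<subseteq> A))))"

definition chain :: "'u set \<Rightarrow> ('u \<Rightarrow> 'n::finite box \<Rightarrow> 'n box) \<Rightarrow> real \<Rightarrow> (real^'n) set \<Rightarrow>
    (real^'n) set \<Rightarrow> (real^'n) set \<Rightarrow> bool" where
  "chain U F eps XX A B \<longleftrightarrow> (\<exists>Xs. Xs 0 = A \<and> (\<exists>m. \<forall>j\<ge>m. Xs j = B) \<and>
     (\<forall>j. Xs (Suc j) \<subseteq> Xs j \<and> (\<forall>p\<in>Xs j - Xs (Suc j). rej U F eps XX p (Xs j))))"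

lemma chain_refl: "chain U F eps XX A A"
  unfolding chain_def by (rule exI[of _ "\<lambda>_. A"]) auto

lemma chain_snoc:
  assumes "chain U F eps XX A B" "C \<subseteq> B" "\<forall>p\<in>B - C. rej U F eps XX p B"
  shows "chain U F eps XX A C"
proof -
  obtain Xs m where X0: "Xs 0 = A" and Xm: "\<forall>j\<ge>m. Xs j = B"
    and Xd: "\<forall>j. Xs (Suc j) \<subseteq> Xs j \<and> (\<forall>p\<in>Xs j - Xs (Suc j). rej U F eps XX p (Xs j))"
    using assms(1) unfolding chain_def by blast
  define Ys where "Ys j = (if j \<le> m then Xs j else C)" for j
  have "Ys 0 = A" unfolding Ys_def using X0 by simp
  moreover have "\<forall>j\<ge>Suc m. Ys j = C" unfolding Ys_def by auto
  moreover have "Ys (Suc j) \<subseteq> Ys j \<and> (\<forall>p\<in>Ys j - Ys (Suc j). rej U F eps XX p (Ys j))" for j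
  proof (cases "Suc j \<le> m")
    case True then show ?thesis unfolding Ys_def using Xd by auto
  next
    case False
    show ?thesis
    proof (cases "j = m")
      case True then show ?thesis unfolding Ys_def using Xm assms(2,3) by auto
    next
      case False then show ?thesis unfolding Ys_def using \<open>\<not> Suc j \<le> m\<close> by auto
    qed
  qed
  ultimately show ?thesis unfolding chain_def by blast
qed

lemma rej_from_cpred:
  assumes "cpred_spec U F Y eps P L K' Xu' DX' Xc'"
    and "\<And>B. P B \<Longrightarrow> valid_box B \<and> box_set B \<subseteq> XX"
    and "p \<in> boxes_set L" "p \<notin> boxes_set Xu'"
  shows "rej U F eps XX p Y"
proof -
  have "p \<in> boxes_set DX' \<union> boxes_set Xc'" using assms(1,3,4) unfolding cpred_spec_def by auto
  then obtain B where B: "B \<in> set DX' \<union> set Xc'" "p \<in> box_set B" unfolding boxes_set_def by auto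
  have "P B" using B(1) assms(1) unfolding cpred_spec_def by auto
  then have vb: "valid_box B \<and> box_set B \<subseteq> XX" using assms(2) by blast
  have "(\<forall>u\<in>U. box_set (F u B) \<inter> Y = {}) \<or> (wid B < eps \<and> (\<forall>u\<in>U. \<not> box_set (F u B) \<subseteq> Y))"
    using B(1) assms(1) unfolding cpred_spec_def by blast
  then show ?thesis unfolding rej_def using B vb by blast
qed




locale alg =
  fixes U :: "'u set" and F :: "'u \<Rightarrow> 'n::finite box \<Rightarrow> 'n box" and eps :: real
    and XX Om S1 :: "(real^'n) set" and R :: "'n box set"
  assumes eps: "eps > 0" and finR: "finite R" and Rvalid: "\<And>B. B \<in> R \<Longrightarrow> valid_box B"
    and Rsplit: "\<And>B. B \<in> R \<Longrightarrow> \<not> wid B < eps \<Longrightarrow> fst (bisect B) \<in> R \<and> snd (bisect B) \<in> R"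
    and OmXX: "Om \<subseteq> XX"
begin

definition PO where "PO B \<longleftrightarrow> B \<in> R \<and> box_set B \<subseteq> Om"
definition PX where "PX B \<longleftrightarrow> B \<in> R \<and> box_set B \<subseteq> XX"

lemma PO_valid: "PO B \<Longrightarrow> valid_box B" unfolding PO_def using Rvalid by auto
lemma PX_valid: "PX B \<Longrightarrow> valid_box B" unfolding PX_def using Rvalid by auto
lemma PO_XX: "PO B \<Longrightarrow> valid_box B \<and> box_set B \<subseteq> XX" using PO_valid OmXX unfolding PO_def by auto
lemma PX_XX: "PX B \<Longrightarrow> valid_box B \<and> box_set B \<subseteq> XX" using PX_valid unfolding PX_def by auto
lemma PO_split: "PO B \<Longrightarrow> \<not> wid B < eps \<Longrightarrow> PO (fst (bisect B)) \<and> PO (snd (bisect B))"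
  unfolding PO_def using Rsplit bisect_sub[OF Rvalid] by blast
lemma PX_split: "PX B \<Longrightarrow> \<not> wid B < eps \<Longrightarrow> PX (fst (bisect B)) \<and> PX (snd (bisect B))"
  unfolding PX_def using Rsplit bisect_sub[OF Rvalid] by blast

lemma cpred_PO:
  assumes "\<forall>B\<in>set L. PO B"
  shows "\<exists>K' Xu' DX' Xc'. cpred U F L Y eps = Some (K', Xu', DX', Xc') \<and>
     cpred_spec U F Y eps PO L K' Xu' DX' Xc'"
  by (rule cpred_spec) (auto intro: PO_valid dest: PO_split simp: eps assms)

lemma cpred_PX:
  assumes "\<forall>B\<in>set L. PX B"
  shows "\<exists>K' Xu' DX' Xc'. cpred U F L Y eps = Some (K', Xu', DX', Xc') \<and>
     cpred_spec U F Y eps PX L K' Xu' DX' Xc'"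
  by (rule cpred_spec) (auto intro: PX_valid dest: PX_split simp: eps assms)

definition inner_inv where
  "inner_inv Z S0 X0 X Xt V G2 Kv \<longleftrightarrow> Xt = Z @ V \<and> (\<exists>LX. X = boxes_set LX \<and> set LX \<subseteq> R) \<and>
     boxes_set Xt \<subseteq> X \<and> map fst Kv = V \<and>
     (\<forall>p\<in>set Kv. snd p \<in> U \<and> box_set (F (snd p) (fst p)) \<subseteq> X) \<and>
     (\<forall>B\<in>set V. PO B) \<and> (\<forall>B\<in>set G2. PO B) \<and> S0 \<subseteq> boxes_set V \<union> boxes_set G2 \<and>
     chain U F eps XX X0 X \<and> (\<forall>p\<in>X - boxes_set Xt. rej U F eps XX p X)"

definition inner_res where
  "inner_res Z S0 X0 Xres G2res Kvres \<longleftrightarrow> Xres = Z @ map fst Kvres \<and>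
     (\<forall>p\<in>set Kvres. snd p \<in> U \<and> box_set (F (snd p) (fst p)) \<subseteq> boxes_set Xres \<and> PO (fst p)) \<and>
     (\<forall>B\<in>set G2res. PO B) \<and> S0 \<subseteq> boxes_set (map fst Kvres) \<union> boxes_set G2res \<and>
     chain U F eps XX X0 (boxes_set Xres)"

lemma inner_main:
  assumes Z: "set Z \<subseteq> R"
  shows "inner_inv Z S0 X0 X Xt V G2 Kv \<Longrightarrow> \<exists>Xres G2res Kvres.
    alg3_inner U F eps Z X Xt V G2 Kv = Some (Xres, G2res, Kvres) \<and> inner_res Z S0 X0 Xres G2res Kvres"
proof (induction "card {B\<in>R. box_set B \<subseteq> X}" arbitrary: X Xt V G2 Kv rule: less_induct)
  case less
  note inv = less.prems[unfolded inner_inv_def]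
  have VPO: "\<forall>B\<in>set V. PO B" using inv by blast
  show ?case
  proof (cases "boxes_set Xt = X")
    case True
    then have "alg3_inner U F eps Z X Xt V G2 Kv = Some (Xt, G2, Kv)"
      by (subst alg3_inner.simps) simp
    moreover have "inner_res Z S0 X0 Xt G2 Kv"
    proof -
      have "map fst Kv = V" using inv by blast
      then have sV: "set V = fst ` set Kv" by (metis list.set_map)
      have KPO: "\<forall>p\<in>set Kv. PO (fst p)"
      proof
        fix p assume "p \<in> set Kv"
        then have "fst p \<in> set V" unfolding sV by (rule imageI)
        then show "PO (fst p)" using VPO by blast
      qed
      have e1: "Xt = Z @ map fst Kv" using inv by simp
      show ?thesis unfolding inner_res_def
      proof (intro conjI)
        show "\<forall>p\<in>set Kv. snd p \<in> U \<and> box_set (F (snd p) (fst p)) \<subseteq> boxes_set Xt \<and> PO (fst p)"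
          using KPO inv True by blast
      qed (use e1 inv True in auto)
    qed
    ultimately show ?thesis by blast
  next
    case False
    obtain Kv' Vu DV Vc where cp: "cpred U F V (boxes_set Xt) eps = Some (Kv', Vu, DV, Vc)"
      and sp: "cpred_spec U F (boxes_set Xt) eps PO V Kv' Vu DV Vc"
      using cpred_PO[OF VPO] by blast
    have eq: "alg3_inner U F eps Z X Xt V G2 Kv =
        alg3_inner U F eps Z (boxes_set Xt) (Z @ Vu) Vu (G2 @ DV @ Vc) Kv'"
      by (subst alg3_inner.simps) (simp add: False cp)
    have XtR: "set Xt \<subseteq> R" using inv Z VPO unfolding PO_def by auto
    have XtX: "boxes_set Xt \<subseteq> X" using inv by blast
    have sub: "boxes_set (Z @ Vu) \<subseteq> boxes_set Xt" using sp inv unfolding cpred_spec_def by auto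
    have rj: "\<forall>p\<in>boxes_set Xt - boxes_set (Z @ Vu). rej U F eps XX p (boxes_set Xt)"
    proof
      fix p assume p: "p \<in> boxes_set Xt - boxes_set (Z @ Vu)"
      then have "p \<in> boxes_set V" "p \<notin> boxes_set Vu" using inv by auto
      then show "rej U F eps XX p (boxes_set Xt)" using rej_from_cpred[OF sp PO_XX] by blast
    qed
    have ch: "chain U F eps XX X0 (boxes_set Xt)"
      using chain_snoc[of U F eps XX X0 X "boxes_set Xt"] inv XtX by blast
    have inv': "inner_inv Z S0 X0 (boxes_set Xt) (Z@Vu) Vu (G2@DV@Vc) Kv'"
      unfolding inner_inv_def
    proof (intro conjI)
      show "\<exists>LX. boxes_set Xt = boxes_set LX \<and> set LX \<subseteq> R" using XtR by blast
      show "S0 \<subseteq> boxes_set Vu \<union> boxes_set (G2 @ DV @ Vc)" using inv sp unfolding cpred_spec_def by auto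
      show "Z @ Vu = Z @ Vu" by simp
      show "boxes_set (Z@Vu) \<subseteq> boxes_set Xt" by (rule sub)
      show "map fst Kv' = Vu" using sp unfolding cpred_spec_def by blast
      show "\<forall>p\<in>set Kv'. snd p \<in> U \<and> box_set (F (snd p) (fst p)) \<subseteq> boxes_set Xt"
        using sp unfolding cpred_spec_def by blast
      show "\<forall>B\<in>set Vu. PO B" using sp unfolding cpred_spec_def by blast
      show "\<forall>B\<in>set (G2@DV@Vc). PO B" using sp inv unfolding cpred_spec_def by auto
      show "chain U F eps XX X0 (boxes_set Xt)" by (rule ch)
      show "\<forall>p\<in>boxes_set Xt - boxes_set (Z @ Vu). rej U F eps XX p (boxes_set Xt)" by (rule rj)
    qed
    obtain LX where LX: "X = boxes_set LX" "set LX \<subseteq> R" using inv by blast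
    have meas: "card {B\<in>R. box_set B \<subseteq> boxes_set Xt} < card {B\<in>R. box_set B \<subseteq> X}"
    proof (rule psubset_card_mono)
      show "finite {B\<in>R. box_set B \<subseteq> X}" using finR by auto
      have "\<exists>B\<in>set LX. \<not> box_set B \<subseteq> boxes_set Xt"
      proof (rule ccontr)
        assume "\<not> ?thesis"
        then have "X \<subseteq> boxes_set Xt" using LX unfolding boxes_set_def by auto
        then show False using False XtX by auto
      qed
      then obtain B where "B \<in> set LX" "\<not> box_set B \<subseteq> boxes_set Xt" by blast
      moreover have "box_set B \<subseteq> X" using LX \<open>B \<in> set LX\<close> unfolding boxes_set_def by auto
      ultimately show "{B\<in>R. box_set B \<subseteq> boxes_set Xt} \<subset> {B\<in>R. box_set B \<subseteq> X}"
        using LX XtX by blast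
    qed
    from less(1)[OF meas inv'] eq show ?thesis by simp
  qed
qed

lemma inner_init:
  assumes Z: "set Z \<subseteq> R" and G2: "\<forall>B\<in>set G2. PO B"
  shows "\<exists>Xres G2res Kvres. alg3_inner U F eps Z {} (Z @ G2) G2 [] [] = Some (Xres, G2res, Kvres) \<and>
     inner_res Z (boxes_set G2) (boxes_set (Z @ G2)) Xres G2res Kvres"
proof (cases "boxes_set (Z @ G2) = {}")
  case True
  have "G2 = []"
  proof (rule ccontr)
    assume "G2 \<noteq> []"
    then obtain B where B: "B \<in> set G2" by (cases G2) auto
    then have "PO B" using G2 by auto
    then have "fst B \<in> box_set B" by (rule valid_nonempty[OF PO_valid])
    then have "fst B \<in> boxes_set (Z @ G2)" using B unfolding boxes_set_def by auto
    then show False using True by auto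
  qed
  then have "alg3_inner U F eps Z {} (Z @ G2) G2 [] [] = Some (Z, [], [])"
    using True by (subst alg3_inner.simps) simp
  moreover have "inner_res Z (boxes_set G2) (boxes_set (Z @ G2)) Z [] []"
    using True \<open>G2 = []\<close> chain_refl unfolding inner_res_def by auto
  ultimately show ?thesis by blast
next
  case False
  obtain Kv' Vu DV Vc where cp: "cpred U F G2 (boxes_set (Z @ G2)) eps = Some (Kv', Vu, DV, Vc)"
    and sp: "cpred_spec U F (boxes_set (Z @ G2)) eps PO G2 Kv' Vu DV Vc"
    using cpred_PO[OF G2] by blast
  have eq: "alg3_inner U F eps Z {} (Z @ G2) G2 [] [] =
      alg3_inner U F eps Z (boxes_set (Z @ G2)) (Z @ Vu) Vu (DV @ Vc) Kv'"
    using False by (subst alg3_inner.simps[of U F eps Z "{}"]) (auto simp add: cp[simplified])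
  have rj: "\<forall>p\<in>boxes_set (Z @ G2) - boxes_set (Z @ Vu). rej U F eps XX p (boxes_set (Z @ G2))"
  proof
    fix p assume p: "p \<in> boxes_set (Z @ G2) - boxes_set (Z @ Vu)"
    then have "p \<in> boxes_set G2" "p \<notin> boxes_set Vu" by auto
    then show "rej U F eps XX p (boxes_set (Z @ G2))" using rej_from_cpred[OF sp PO_XX] by blast
  qed
  have GR: "set (Z @ G2) \<subseteq> R" using Z G2 unfolding PO_def by auto
  have inv: "inner_inv Z (boxes_set G2) (boxes_set (Z @ G2)) (boxes_set (Z @ G2)) (Z @ Vu) Vu (DV @ Vc) Kv'"
    unfolding inner_inv_def
  proof (intro conjI)
    show "\<exists>LX. boxes_set (Z @ G2) = boxes_set LX \<and> set LX \<subseteq> R" using GR by blast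
    show "Z @ Vu = Z @ Vu" by simp
    show "boxes_set (Z@Vu) \<subseteq> boxes_set (Z @ G2)" using sp unfolding cpred_spec_def by auto
    show "map fst Kv' = Vu" using sp unfolding cpred_spec_def by blast
    show "\<forall>p\<in>set Kv'. snd p \<in> U \<and> box_set (F (snd p) (fst p)) \<subseteq> boxes_set (Z @ G2)"
      using sp unfolding cpred_spec_def by blast
    show "\<forall>B\<in>set Vu. PO B" using sp unfolding cpred_spec_def by blast
    show "\<forall>B\<in>set (DV@Vc). PO B" using sp unfolding cpred_spec_def by auto
    show "boxes_set G2 \<subseteq> boxes_set Vu \<union> boxes_set (DV @ Vc)" using sp unfolding cpred_spec_def by auto
    show "chain U F eps XX (boxes_set (Z @ G2)) (boxes_set (Z @ G2))" by (rule chain_refl)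
    show "\<forall>p\<in>boxes_set (Z @ G2) - boxes_set (Z @ Vu). rej U F eps XX p (boxes_set (Z @ G2))" by (rule rj)
  qed
  from inner_main[OF Z inv] eq show ?thesis by simp
qed

end




lemma ip_nth: "interval_part K = (\<Union>i\<in>{i. i < length K}. box_set (fst (K!i)))"
proof (rule set_eqI)
  fix x
  show "x \<in> interval_part K \<longleftrightarrow> x \<in> (\<Union>i\<in>{i. i < length K}. box_set (fst (K!i)))"
  proof
    assume "x \<in> interval_part K"
    then obtain p where p: "p \<in> set K" "x \<in> box_set (fst p)" unfolding interval_part_def by blast
    then obtain i where "i < length K" "K!i = p" by (meson in_set_conv_nth)
    then show "x \<in> (\<Union>i\<in>{i. i < length K}. box_set (fst (K!i)))" using p by blast
  next
    assume "x \<in> (\<Union>i\<in>{i. i < length K}. box_set (fst (K!i)))"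
    then obtain i where i: "i < length K" "x \<in> box_set (fst (K!i))" by blast
    have "K!i \<in> set K" using i(1) by simp
    then show "x \<in> interval_part K" using i unfolding interval_part_def by blast
  qed
qed

lemma ip_map: "interval_part K = boxes_set (map fst K)"
  unfolding interval_part_def boxes_set_def by auto

lemma ip_append[simp]: "interval_part (K1 @ K2) = interval_part K1 \<union> interval_part K2"
  unfolding interval_part_def by auto

lemma ip_nil[simp]: "interval_part [] = {}"
  unfolding interval_part_def by auto

lemma disj_mono: "A \<subseteq> B \<or> (P \<and> A \<subseteq> C) \<Longrightarrow> B \<subseteq> B' \<Longrightarrow> C \<subseteq> C' \<Longrightarrow> A \<subseteq> B' \<or> (P \<and> A \<subseteq> C')"
  by blast

context alg
begin

definition sound where
  "sound K \<longleftrightarrow> (\<exists>lv. \<forall>j<length K. lv j \<le> j \<and> snd (K!j) \<in> U \<and> valid_box (fst (K!j)) \<and>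
     box_set (fst (K!j)) \<subseteq> XX \<and>
     (box_set (F (snd (K!j)) (fst (K!j))) \<subseteq> (\<Union>i\<in>{i. i < length K \<and> lv i < lv j}. box_set (fst (K!i))) \<or>
      (box_set (fst (K!j)) \<subseteq> Om \<and>
       box_set (F (snd (K!j)) (fst (K!j))) \<subseteq> (\<Union>i\<in>{i. i < length K \<and> lv i \<le> lv j}. box_set (fst (K!i))))))"

lemma sound_nil: "sound []" unfolding sound_def by auto

lemma sound_append:
  assumes "sound K"
    and new: "\<forall>p\<in>set Kn. snd p \<in> U \<and> valid_box (fst p) \<and> box_set (fst p) \<subseteq> XX \<and>
       (box_set (F (snd p) (fst p)) \<subseteq> interval_part K \<or>
        (box_set (fst p) \<subseteq> Om \<and> box_set (F (snd p) (fst p)) \<subseteq> interval_part (K @ Kn)))"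
  shows "sound (K @ Kn)"
proof -
  obtain lv where lv: "\<forall>j<length K. lv j \<le> j \<and> snd (K!j) \<in> U \<and> valid_box (fst (K!j)) \<and>
     box_set (fst (K!j)) \<subseteq> XX \<and>
     (box_set (F (snd (K!j)) (fst (K!j))) \<subseteq> (\<Union>i\<in>{i. i < length K \<and> lv i < lv j}. box_set (fst (K!i))) \<or>
      (box_set (fst (K!j)) \<subseteq> Om \<and>
       box_set (F (snd (K!j)) (fst (K!j))) \<subseteq> (\<Union>i\<in>{i. i < length K \<and> lv i \<le> lv j}. box_set (fst (K!i)))))"
    using assms(1) unfolding sound_def by blast
  define lv' where "lv' j = (if j < length K then lv j else length K)" for j
  let ?K = "K @ Kn"
  have lvb: "lv' i \<le> length K" for i
  proof (cases "i < length K")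
    case True then have "lv i \<le> i" using lv by blast
    then show ?thesis using True unfolding lv'_def by simp
  next
    case False then show ?thesis unfolding lv'_def by simp
  qed
  have "lv' j \<le> j \<and> snd (?K!j) \<in> U \<and> valid_box (fst (?K!j)) \<and>
     box_set (fst (?K!j)) \<subseteq> XX \<and>
     (box_set (F (snd (?K!j)) (fst (?K!j))) \<subseteq> (\<Union>i\<in>{i. i < length ?K \<and> lv' i < lv' j}. box_set (fst (?K!i))) \<or>
      (box_set (fst (?K!j)) \<subseteq> Om \<and>
       box_set (F (snd (?K!j)) (fst (?K!j))) \<subseteq> (\<Union>i\<in>{i. i < length ?K \<and> lv' i \<le> lv' j}. box_set (fst (?K!i)))))"
    if j: "j < length ?K" for j
  proof (cases "j < length K")
    case True
    have e: "?K!j = K!j" using True by (simp add: nth_append)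
    have s1: "(\<Union>i\<in>{i. i < length K \<and> lv i < lv j}. box_set (fst (K!i))) \<subseteq>
              (\<Union>i\<in>{i. i < length ?K \<and> lv' i < lv' j}. box_set (fst (?K!i)))"
    proof
      fix x assume "x \<in> (\<Union>i\<in>{i. i < length K \<and> lv i < lv j}. box_set (fst (K!i)))"
      then obtain i where i: "i < length K" "lv i < lv j" "x \<in> box_set (fst (K!i))" by blast
      then show "x \<in> (\<Union>i\<in>{i. i < length ?K \<and> lv' i < lv' j}. box_set (fst (?K!i)))"
        using True unfolding lv'_def by (intro UN_I[of i]) (auto simp: nth_append)
    qed
    have s2: "(\<Union>i\<in>{i. i < length K \<and> lv i \<le> lv j}. box_set (fst (K!i))) \<subseteq>
              (\<Union>i\<in>{i. i < length ?K \<and> lv' i \<le> lv' j}. box_set (fst (?K!i)))"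
    proof
      fix x assume "x \<in> (\<Union>i\<in>{i. i < length K \<and> lv i \<le> lv j}. box_set (fst (K!i)))"
      then obtain i where i: "i < length K" "lv i \<le> lv j" "x \<in> box_set (fst (K!i))" by blast
      then show "x \<in> (\<Union>i\<in>{i. i < length ?K \<and> lv' i \<le> lv' j}. box_set (fst (?K!i)))"
        using True unfolding lv'_def by (intro UN_I[of i]) (auto simp: nth_append)
    qed
    have lj: "lv' j = lv j" using True unfolding lv'_def by simp
    note lvj = lv[rule_format, OF True]
    have A: "lv j \<le> j \<and> snd (K!j) \<in> U \<and> valid_box (fst (K!j)) \<and> box_set (fst (K!j)) \<subseteq> XX"
      using lvj by simp
    have D: "box_set (F (snd (K!j)) (fst (K!j))) \<subseteq> (\<Union>i\<in>{i. i < length K \<and> lv i < lv j}. box_set (fst (K!i))) \<or>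
      (box_set (fst (K!j)) \<subseteq> Om \<and>
       box_set (F (snd (K!j)) (fst (K!j))) \<subseteq> (\<Union>i\<in>{i. i < length K \<and> lv i \<le> lv j}. box_set (fst (K!i))))"
      using lvj by (elim conjE)
    have D': "box_set (F (snd (K!j)) (fst (K!j))) \<subseteq> (\<Union>i\<in>{i. i < length ?K \<and> lv' i < lv' j}. box_set (fst (?K!i))) \<or>
      (box_set (fst (K!j)) \<subseteq> Om \<and>
       box_set (F (snd (K!j)) (fst (K!j))) \<subseteq> (\<Union>i\<in>{i. i < length ?K \<and> lv' i \<le> lv' j}. box_set (fst (?K!i))))"
      using D s1 s2 by (rule disj_mono)
    have "lv' j \<le> j" using A lj by simp
    then show ?thesis unfolding e using A D' by (intro conjI) (blast | assumption)+
  next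
    case False
    define p where "p = Kn ! (j - length K)"
    have e: "?K!j = p" using False unfolding p_def by (simp add: nth_append)
    have pin: "p \<in> set Kn" unfolding p_def using j False by auto
    have lj: "lv' j = length K" using False unfolding lv'_def by simp
    have c1: "interval_part K \<subseteq> (\<Union>i\<in>{i. i < length ?K \<and> lv' i < lv' j}. box_set (fst (?K!i)))"
    proof
      fix x assume "x \<in> interval_part K"
      then obtain i where i: "i < length K" "x \<in> box_set (fst (K!i))" unfolding ip_nth by blast
      have "lv i \<le> i" using lv i(1) by blast
      moreover have "lv' i = lv i" using i(1) unfolding lv'_def by simp
      ultimately have "lv' i < lv' j" using i(1) lj by simp
      then show "x \<in> (\<Union>i\<in>{i. i < length ?K \<and> lv' i < lv' j}. box_set (fst (?K!i)))"
        using i by (intro UN_I[of i]) (auto simp: nth_append)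
    qed
    have c2: "interval_part ?K \<subseteq> (\<Union>i\<in>{i. i < length ?K \<and> lv' i \<le> lv' j}. box_set (fst (?K!i)))"
    proof
      fix x assume "x \<in> interval_part ?K"
      then obtain i where i: "i < length ?K" "x \<in> box_set (fst (?K!i))" unfolding ip_nth[of ?K] by blast
      have "lv' i \<le> lv' j" using lvb[of i] lj by simp
      then show "x \<in> (\<Union>i\<in>{i. i < length ?K \<and> lv' i \<le> lv' j}. box_set (fst (?K!i)))"
        using i by blast
    qed
    note np = new[rule_format, OF pin]
    have A: "snd p \<in> U \<and> valid_box (fst p) \<and> box_set (fst p) \<subseteq> XX" using np by simp
    have D: "box_set (F (snd p) (fst p)) \<subseteq> interval_part K \<or>
        (box_set (fst p) \<subseteq> Om \<and> box_set (F (snd p) (fst p)) \<subseteq> interval_part ?K)"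
      using np by (elim conjE)
    have D': "box_set (F (snd p) (fst p)) \<subseteq> (\<Union>i\<in>{i. i < length ?K \<and> lv' i < lv' j}. box_set (fst (?K!i))) \<or>
        (box_set (fst p) \<subseteq> Om \<and> box_set (F (snd p) (fst p)) \<subseteq> (\<Union>i\<in>{i. i < length ?K \<and> lv' i \<le> lv' j}. box_set (fst (?K!i))))"
      using D c1 c2 by (rule disj_mono)
    have "lv' j \<le> j" using lj False by simp
    then show ?thesis unfolding e using A D' by (intro conjI) (blast | assumption)+
  qed
  then show ?thesis unfolding sound_def by blast
qed

definition outer_inv where
  "outer_inv Yt G1 G2 K \<longleftrightarrow> set Yt \<subseteq> R \<and> (\<forall>B\<in>set G1. PX B) \<and> (\<forall>B\<in>set G2. PO B) \<and>
     S1 \<subseteq> boxes_set Yt \<union> boxes_set G1 \<and> Om \<subseteq> boxes_set Yt \<union> boxes_set G2 \<and>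
     sound K \<and> boxes_set Yt = interval_part K"

definition post where
  "post Y Yt \<longleftrightarrow> Y \<subseteq> boxes_set Yt \<and> (\<forall>p\<in>S1 - boxes_set Yt. rej U F eps XX p Y) \<and>
     (\<exists>X0. Om \<subseteq> X0 \<and> chain U F eps XX X0 (boxes_set Yt))"

end




context alg
begin

lemma outer_step:
  assumes inv: "outer_inv Yt G1 G2 K"
  shows "\<exists>X G1' G2' K'. (\<forall>Y. boxes_set Yt \<noteq> Y \<longrightarrow>
      alg3_outer U F eps Y Yt G1 G2 K = alg3_outer U F eps (boxes_set Yt) X G1' G2' K') \<and>
      outer_inv X G1' G2' K' \<and> post (boxes_set Yt) X"
proof -
  have G1PX: "\<forall>B\<in>set G1. PX B" and G2PO: "\<forall>B\<in>set G2. PO B" and YtR: "set Yt \<subseteq> R"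
    and S1c: "S1 \<subseteq> boxes_set Yt \<union> boxes_set G1" and Omc: "Om \<subseteq> boxes_set Yt \<union> boxes_set G2"
    and sK: "sound K" and YtK: "boxes_set Yt = interval_part K"
    using inv unfolding outer_inv_def by auto
  obtain Kz Zu DZ Zc where cp: "cpred U F G1 (boxes_set Yt) eps = Some (Kz, Zu, DZ, Zc)"
    and sp: "cpred_spec U F (boxes_set Yt) eps PX G1 Kz Zu DZ Zc"
    using cpred_PX[OF G1PX] by blast
  have spK: "map fst Kz = Zu" "\<forall>p\<in>set Kz. snd p \<in> U \<and> box_set (F (snd p) (fst p)) \<subseteq> boxes_set Yt"
    and spC: "boxes_set G1 = boxes_set Zu \<union> boxes_set DZ \<union> boxes_set Zc"
    and spP: "\<forall>B\<in>set Zu \<union> set DZ \<union> set Zc. PX B"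
    using sp unfolding cpred_spec_def by blast+
  define Z where "Z = Yt @ Zu"
  have ZR: "set Z \<subseteq> R" using YtR spP unfolding Z_def PX_def by auto
  obtain X G2' Kv where inn: "alg3_inner U F eps Z {} (Z @ G2) G2 [] [] = Some (X, G2', Kv)"
    and res: "inner_res Z (boxes_set G2) (boxes_set (Z @ G2)) X G2' Kv"
    using inner_init[OF ZR G2PO] by blast
  have rX: "X = Z @ map fst Kv"
    and rK: "\<forall>p\<in>set Kv. snd p \<in> U \<and> box_set (F (snd p) (fst p)) \<subseteq> boxes_set X \<and> PO (fst p)"
    and rG: "\<forall>B\<in>set G2'. PO B"
    and rS: "boxes_set G2 \<subseteq> boxes_set (map fst Kv) \<union> boxes_set G2'"
    and rC: "chain U F eps XX (boxes_set (Z @ G2)) (boxes_set X)"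
    using res unfolding inner_res_def by blast+
  have eq: "alg3_outer U F eps Y Yt G1 G2 K = alg3_outer U F eps (boxes_set Yt) X (DZ @ Zc) G2' (K @ Kz @ Kv)"
    if "boxes_set Yt \<noteq> Y" for Y
    using that inn unfolding Z_def
    by (subst alg3_outer.simps[of U F eps Y]) (simp add: cp)
  have KvR: "\<forall>p\<in>set Kv. fst p \<in> R" using rK unfolding PO_def by blast
  have XR: "set X \<subseteq> R" using ZR KvR rX by auto
  have sX: "boxes_set X = boxes_set Yt \<union> boxes_set Zu \<union> interval_part Kv"
    using rX unfolding Z_def ip_map by (simp add: Un_assoc)
  have ipKz: "interval_part Kz = boxes_set Zu" using spK(1) unfolding ip_map by simp
  have XK: "boxes_set X = interval_part (K @ Kz @ Kv)" using sX YtK ipKz by (simp add: Un_assoc)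
  have snd: "sound (K @ Kz @ Kv)"
  proof (rule sound_append[OF sK])
    show "\<forall>p\<in>set (Kz @ Kv). snd p \<in> U \<and> valid_box (fst p) \<and> box_set (fst p) \<subseteq> XX \<and>
       (box_set (F (snd p) (fst p)) \<subseteq> interval_part K \<or>
        (box_set (fst p) \<subseteq> Om \<and> box_set (F (snd p) (fst p)) \<subseteq> interval_part (K @ Kz @ Kv)))"
    proof
      fix p assume "p \<in> set (Kz @ Kv)"
      then consider (z) "p \<in> set Kz" | (v) "p \<in> set Kv" by auto
      then show "snd p \<in> U \<and> valid_box (fst p) \<and> box_set (fst p) \<subseteq> XX \<and>
       (box_set (F (snd p) (fst p)) \<subseteq> interval_part K \<or>
        (box_set (fst p) \<subseteq> Om \<and> box_set (F (snd p) (fst p)) \<subseteq> interval_part (K @ Kz @ Kv)))"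
      proof cases
        case z
        have "fst p \<in> set Zu" using z spK(1) by (metis image_eqI list.set_map)
        then have "PX (fst p)" using spP by blast
        then show ?thesis using PX_XX[of "fst p"] spK(2) z YtK by auto
      next
        case v
        have "PO (fst p)" using rK v by blast
        then show ?thesis using PO_XX[of "fst p"] rK v XK unfolding PO_def by auto
      qed
    qed
  qed
  have inv': "outer_inv X (DZ @ Zc) G2' (K @ Kz @ Kv)"
    unfolding outer_inv_def
  proof (intro conjI)
    show "set X \<subseteq> R" by (rule XR)
    show "\<forall>B\<in>set (DZ @ Zc). PX B" using spP by auto
    show "\<forall>B\<in>set G2'. PO B" by (rule rG)
    show "S1 \<subseteq> boxes_set X \<union> boxes_set (DZ @ Zc)" using S1c spC sX by auto
    show "Om \<subseteq> boxes_set X \<union> boxes_set G2'" using Omc rS sX ip_map[of Kv] by auto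
    show "sound (K @ Kz @ Kv)" by (rule snd)
    show "boxes_set X = interval_part (K @ Kz @ Kv)" by (rule XK)
  qed
  have pst: "post (boxes_set Yt) X"
    unfolding post_def
  proof (intro conjI)
    show "boxes_set Yt \<subseteq> boxes_set X" using sX by auto
    show "\<forall>p\<in>S1 - boxes_set X. rej U F eps XX p (boxes_set Yt)"
    proof
      fix p assume p: "p \<in> S1 - boxes_set X"
      then have "p \<in> boxes_set G1" "p \<notin> boxes_set Zu" using S1c sX by auto
      then show "rej U F eps XX p (boxes_set Yt)" using rej_from_cpred[OF sp PX_XX] by blast
    qed
    show "\<exists>X0. Om \<subseteq> X0 \<and> chain U F eps XX X0 (boxes_set X)"
      using rC Omc unfolding Z_def by (intro exI[of _ "boxes_set (Z @ G2)"]) (auto simp: Z_def)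
  qed
  show ?thesis using eq inv' pst by blast
qed

lemma outer_main:
  shows "outer_inv Yt G1 G2 K \<Longrightarrow> post Y Yt \<Longrightarrow> \<exists>Ks. alg3_outer U F eps Y Yt G1 G2 K = Some Ks \<and>
    sound Ks \<and> (\<forall>p\<in>S1 - interval_part Ks. rej U F eps XX p (interval_part Ks)) \<and>
    (\<exists>X0. Om \<subseteq> X0 \<and> chain U F eps XX X0 (interval_part Ks))"
proof (induction "card R - card {B\<in>R. box_set B \<subseteq> Y}" arbitrary: Y Yt G1 G2 K rule: less_induct)
  case less
  show ?case
  proof (cases "boxes_set Yt = Y")
    case True
    then have "alg3_outer U F eps Y Yt G1 G2 K = Some K" by (subst alg3_outer.simps) simp
    moreover have "sound K" "boxes_set Yt = interval_part K" using less.prems unfolding outer_inv_def by auto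
    ultimately show ?thesis using less.prems True unfolding post_def by auto
  next
    case False
    obtain X G1' G2' K' where eq: "alg3_outer U F eps Y Yt G1 G2 K = alg3_outer U F eps (boxes_set Yt) X G1' G2' K'"
      and inv': "outer_inv X G1' G2' K'" and pst: "post (boxes_set Yt) X"
      using outer_step[OF less.prems(1)] False by blast
    have YY: "Y \<subseteq> boxes_set Yt" using less.prems(2) unfolding post_def by blast
    have YtR: "set Yt \<subseteq> R" using less.prems(1) unfolding outer_inv_def by blast
    have lt: "card {B\<in>R. box_set B \<subseteq> Y} < card {B\<in>R. box_set B \<subseteq> boxes_set Yt}"
    proof (rule psubset_card_mono)
      show "finite {B\<in>R. box_set B \<subseteq> boxes_set Yt}" using finR by auto
      have "\<exists>B\<in>set Yt. \<not> box_set B \<subseteq> Y"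
      proof (rule ccontr)
        assume "\<not> ?thesis"
        then have "boxes_set Yt \<subseteq> Y" unfolding boxes_set_def by auto
        then show False using False YY by auto
      qed
      then obtain B where "B \<in> set Yt" "\<not> box_set B \<subseteq> Y" by blast
      moreover have "box_set B \<subseteq> boxes_set Yt" using \<open>B \<in> set Yt\<close> unfolding boxes_set_def by auto
      ultimately show "{B\<in>R. box_set B \<subseteq> Y} \<subset> {B\<in>R. box_set B \<subseteq> boxes_set Yt}"
        using YY YtR by blast
    qed
    have "card {B\<in>R. box_set B \<subseteq> boxes_set Yt} \<le> card R" using finR by (intro card_mono) auto
    then have meas: "card R - card {B\<in>R. box_set B \<subseteq> boxes_set Yt} < card R - card {B\<in>R. box_set B \<subseteq> Y}"
      using lt by linarith
    from less(1)[OF meas inv' pst] eq show ?thesis by simp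
  qed
qed

lemma algorithm3_spec:
  assumes XX: "XX \<noteq> {}" and G1: "\<forall>B\<in>set G1. PX B" and G2: "\<forall>B\<in>set G2. PO B"
    and S1: "S1 \<subseteq> boxes_set G1" and Om: "Om \<subseteq> boxes_set G2"
  shows "\<exists>Ks. algorithm3 U F eps XX G1 G2 = Some Ks \<and>
    sound Ks \<and> (\<forall>p\<in>S1 - interval_part Ks. rej U F eps XX p (interval_part Ks)) \<and>
    (\<exists>X0. Om \<subseteq> X0 \<and> chain U F eps XX X0 (interval_part Ks))"
proof -
  have inv: "outer_inv [] G1 G2 []" unfolding outer_inv_def using G1 G2 S1 Om sound_nil by auto
  obtain X G1' G2' K' where eq: "alg3_outer U F eps XX [] G1 G2 [] = alg3_outer U F eps (boxes_set []) X G1' G2' K'"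
    and inv': "outer_inv X G1' G2' K'" and pst: "post (boxes_set []) X"
    using outer_step[OF inv] XX by force
  show ?thesis unfolding algorithm3_def eq using outer_main[OF inv' pst] .
qed

end




lemma nat_antimono_stable:
  fixes l :: "nat \<Rightarrow> nat"
  assumes "\<And>k. l (Suc k) \<le> l k"
  shows "\<exists>N. \<forall>k\<ge>N. l (Suc k) = l k"
proof -
  define v where "v = (LEAST v. v \<in> range l)"
  have "v \<in> range l" unfolding v_def by (rule LeastI[of _ "l 0"]) auto
  then obtain N where N: "l N = v" by auto
  have lk: "l k = v" if "k \<ge> N" for k
  proof -
    have "l k \<le> l N" using lift_Suc_antimono_le[of l, OF assms that] .
    moreover have "v \<le> l k" unfolding v_def by (rule Least_le) auto
    ultimately show ?thesis using N by simp
  qed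
  show ?thesis
  proof (intro exI allI impI)
    fix k assume k: "N \<le> k"
    then have "N \<le> Suc k" by simp
    then show "l (Suc k) = l k" using lk k by metis
  qed
qed

lemma box_dist:
  assumes "y \<in> box_set C" "z \<in> box_set C"
  shows "infnorm (y - z) \<le> wid C"
proof (rule infnorm_le_cart)
  fix i
  have a: "fst C $ i \<le> y $ i" "y $ i \<le> snd C $ i" "fst C $ i \<le> z $ i" "z $ i \<le> snd C $ i"
    using assms unfolding box_set_def by auto
  have "\<bar>(y - z) $ i\<bar> = \<bar>y $ i - z $ i\<bar>" by simp
  also have "\<dots> \<le> side C i" unfolding side_def abs_le_iff using a by linarith
  finally have "\<bar>(y - z) $ i\<bar> \<le> side C i" .
  then show "\<bar>(y - z) $ i\<bar> \<le> wid C" using side_le_wid[of C i] by linarith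
qed

lemma infnorm_le0: "infnorm (a - b) \<le> 0 \<Longrightarrow> a = (b::real^'n)"
proof -
  assume "infnorm (a - b) \<le> 0"
  then have "infnorm (a - b) = 0" using infnorm_pos_le[of "a - b"] by linarith
  then show "a = b" by (simp add: infnorm_eq_0)
qed

lemma prefix_run_mono: "prefix_run d f k x0 xs (Suc n) \<Longrightarrow> prefix_run d f k x0 xs n"
  unfolding prefix_run_def by auto

context alg
begin

lemma soundness:
  fixes f :: "'u \<Rightarrow> real^'n \<Rightarrow> real^'n"
  assumes sK: "sound K" and incl: "\<forall>u\<in>U. is_inclusion_fun XX (f u) (F u)"
    and x0: "x0 \<in> interval_part K"
  shows "x0 \<in> Win 0 U f XX Om"
proof -
  obtain lv where lv: "\<forall>j<length K. lv j \<le> j \<and> snd (K!j) \<in> U \<and> valid_box (fst (K!j)) \<and>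
     box_set (fst (K!j)) \<subseteq> XX \<and>
     (box_set (F (snd (K!j)) (fst (K!j))) \<subseteq> (\<Union>i\<in>{i. i < length K \<and> lv i < lv j}. box_set (fst (K!i))) \<or>
      (box_set (fst (K!j)) \<subseteq> Om \<and>
       box_set (F (snd (K!j)) (fst (K!j))) \<subseteq> (\<Union>i\<in>{i. i < length K \<and> lv i \<le> lv j}. box_set (fst (K!i)))))"
    using sK unfolding sound_def by blast
  define I where "I x = {i. i < length K \<and> x \<in> box_set (fst (K!i))}" for x
  define L where "L x = Min (lv ` I x)" for x
  define \<kappa> where "\<kappa> x = {snd (K!i) | i. i \<in> I x \<and> lv i = L x}" for x
  have finI: "finite (I x)" for x unfolding I_def by auto
  have ipI: "x \<in> interval_part K \<longleftrightarrow> I x \<noteq> {}" for x unfolding ip_nth I_def by auto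
  have f1: "\<exists>i\<in>I x. lv i = L x" if "x \<in> interval_part K" for x
  proof -
    have "L x \<in> lv ` I x" unfolding L_def using finI that ipI by (intro Min_in) auto
    then show ?thesis by auto
  qed
  have f2: "L x \<le> lv i" if "i \<in> I x" for x i
    unfolding L_def using finI that by (intro Min_le) auto
  have kU: "\<kappa> x \<subseteq> U" for x unfolding \<kappa>_def I_def using lv by auto
  have kne: "\<kappa> x \<noteq> {}" if "x \<in> interval_part K" for x
    using f1[OF that] unfolding \<kappa>_def by auto
  have ipXX: "interval_part K \<subseteq> XX" unfolding ip_nth using lv by auto
  have step: "f u x \<in> interval_part K \<and> L (f u x) \<le> L x \<and> (x \<notin> Om \<longrightarrow> L (f u x) < L x)"
    if x: "x \<in> interval_part K" and u: "u \<in> \<kappa> x" for u x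
  proof -
    obtain i where i: "i \<in> I x" "lv i = L x" "u = snd (K!i)" using u unfolding \<kappa>_def by auto
    have il: "i < length K" and xi: "x \<in> box_set (fst (K!i))" using i(1) unfolding I_def by auto
    note lvi = lv[rule_format, OF il]
    have uU: "u \<in> U" using lvi i(3) by simp
    have "f u ` box_set (fst (K!i)) \<subseteq> box_set (F u (fst (K!i)))"
      using incl uU lvi unfolding is_inclusion_fun_def by blast
    then have fx: "f u x \<in> box_set (F u (fst (K!i)))" using xi by blast
    show ?thesis
    proof (cases "box_set (F (snd (K!i)) (fst (K!i))) \<subseteq> (\<Union>k\<in>{k. k < length K \<and> lv k < lv i}. box_set (fst (K!k)))")
      case True
      then obtain k where k: "k < length K" "lv k < lv i" "f u x \<in> box_set (fst (K!k))"
        using fx i(3) by blast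
      then have "k \<in> I (f u x)" unfolding I_def by auto
      then have "L (f u x) \<le> lv k" by (rule f2)
      then have "L (f u x) < L x" using k(2) i(2) by linarith
      moreover have "f u x \<in> interval_part K" using k unfolding ip_nth by blast
      ultimately show ?thesis by simp
    next
      case False
      then have om: "box_set (fst (K!i)) \<subseteq> Om" and
        sub: "box_set (F (snd (K!i)) (fst (K!i))) \<subseteq> (\<Union>k\<in>{k. k < length K \<and> lv k \<le> lv i}. box_set (fst (K!k)))"
        using lvi by blast+
      obtain k where k: "k < length K" "lv k \<le> lv i" "f u x \<in> box_set (fst (K!k))"
        using fx i(3) sub by blast
      then have "k \<in> I (f u x)" unfolding I_def by auto
      then have "L (f u x) \<le> lv k" by (rule f2)
      then have "L (f u x) \<le> L x" using k(2) i(2) by linarith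
      moreover have "f u x \<in> interval_part K" using k unfolding ip_nth by blast
      moreover have "x \<in> Om" using om xi by blast
      ultimately show ?thesis by simp
    qed
  qed
  have runI: "prefix_run 0 f \<kappa> x0 xs k \<Longrightarrow> xs k \<in> interval_part K" for xs k
  proof (induction k)
    case 0 then show ?case using x0 unfolding prefix_run_def by simp
  next
    case (Suc k)
    have xk: "xs k \<in> interval_part K" using Suc.IH[OF prefix_run_mono[OF Suc.prems]] .
    obtain u where u: "u \<in> \<kappa> (xs k)" "infnorm (xs (Suc k) - f u (xs k)) \<le> 0"
      using Suc.prems unfolding prefix_run_def by blast
    have e: "xs (Suc k) = f u (xs k)" using u(2) by (rule infnorm_le0)
    show ?case unfolding e using step[OF xk u(1)] by simp
  qed
  have "winning_strategy 0 U f XX Om \<kappa> x0"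
    unfolding winning_strategy_def
  proof (intro conjI allI impI)
    show "\<kappa> x \<subseteq> U" for x by (rule kU)
    fix xs k assume "prefix_run 0 f \<kappa> x0 xs k"
    then have "xs k \<in> interval_part K" by (rule runI)
    then show "xs k \<in> XX" "\<kappa> (xs k) \<noteq> {}" using ipXX kne by auto
  next
    fix xs assume all: "\<forall>k. prefix_run 0 f \<kappa> x0 xs k"
    have inK: "xs k \<in> interval_part K" for k using all runI by blast
    have nxt: "xs (Suc k) \<in> interval_part K \<and> L (xs (Suc k)) \<le> L (xs k) \<and> (xs k \<notin> Om \<longrightarrow> L (xs (Suc k)) < L (xs k))" for k
    proof -
      obtain u where u: "u \<in> \<kappa> (xs k)" "infnorm (xs (Suc k) - f u (xs k)) \<le> 0"
        using all unfolding prefix_run_def by blast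
      have e: "xs (Suc k) = f u (xs k)" using u(2) by (rule infnorm_le0)
      show ?thesis unfolding e using step[OF inK u(1)] by simp
    qed
    obtain N where N: "\<forall>k\<ge>N. L (xs (Suc k)) = L (xs k)"
      using nat_antimono_stable[of "\<lambda>k. L (xs k)"] nxt by blast
    show "\<exists>N. \<forall>k\<ge>N. xs k \<in> Om"
    proof (intro exI allI impI)
      fix k assume "N \<le> k"
      then show "xs k \<in> Om" using N nxt[of k] by (metis less_irrefl)
    qed
  qed
  then show ?thesis unfolding Win_def using x0 ipXX by auto
qed

end




context alg
begin

lemma esc:
  fixes f :: "'u \<Rightarrow> real^'n \<Rightarrow> real^'n"
  assumes incl: "\<forall>u\<in>U. is_inclusion_fun XX (f u) (F u)"
    and wr: "\<forall>u\<in>U. \<forall>B. valid_box B \<and> box_set B \<subseteq> XX \<longrightarrow> wid (F u B) \<le> \<rho> * wid B"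
    and rho: "\<rho> > 0" and rd: "\<rho> * eps \<le> \<delta>" and d: "\<delta> \<ge> 0"
    and r: "rej U F eps XX p A" and u: "u \<in> U"
  shows "\<exists>y. infnorm (y - f u p) \<le> \<delta> \<and> y \<notin> A"
proof -
  obtain B where B: "valid_box B" "box_set B \<subseteq> XX" "p \<in> box_set B"
    and dj: "(\<forall>u\<in>U. box_set (F u B) \<inter> A = {}) \<or> (wid B < eps \<and> (\<forall>u\<in>U. \<not> box_set (F u B) \<subseteq> A))"
    using r unfolding rej_def by blast
  have "f u ` box_set B \<subseteq> box_set (F u B)" using incl u B unfolding is_inclusion_fun_def by blast
  then have fp: "f u p \<in> box_set (F u B)" using B(3) by blast
  from dj show ?thesis
  proof
    assume "\<forall>u\<in>U. box_set (F u B) \<inter> A = {}"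
    then have "f u p \<notin> A" using fp u by blast
    then show ?thesis using d by (intro exI[of _ "f u p"]) (simp add: infnorm_0)
  next
    assume a: "wid B < eps \<and> (\<forall>u\<in>U. \<not> box_set (F u B) \<subseteq> A)"
    then obtain y where y: "y \<in> box_set (F u B)" "y \<notin> A" using u by blast
    have "infnorm (y - f u p) \<le> wid (F u B)" by (rule box_dist[OF y(1) fp])
    also have "\<dots> \<le> \<rho> * wid B" using wr u B by blast
    also have "\<dots> \<le> \<rho> * eps" using a rho by (intro mult_left_mono) auto
    also have "\<dots> \<le> \<delta>" by (rule rd)
    finally show ?thesis using y(2) by blast
  qed
qed

lemma completeness:
  fixes f :: "'u \<Rightarrow> real^'n \<Rightarrow> real^'n"
  assumes incl: "\<forall>u\<in>U. is_inclusion_fun XX (f u) (F u)"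
    and wr: "\<forall>u\<in>U. \<forall>B. valid_box B \<and> box_set B \<subseteq> XX \<longrightarrow> wid (F u B) \<le> \<rho> * wid B"
    and rho: "\<rho> > 0" and rd: "\<rho> * eps \<le> \<delta>" and d: "\<delta> \<ge> 0"
    and rejS: "\<forall>p\<in>S1 - Ys. rej U F eps XX p Ys"
    and X0: "Om \<subseteq> X0" and ch: "chain U F eps XX X0 Ys" and S1: "XX - Om \<subseteq> S1"
    and x0: "x0 \<in> Win \<delta> U f XX Om"
  shows "x0 \<in> Ys"
proof (rule ccontr)
  assume nx: "x0 \<notin> Ys"
  obtain \<kappa> where x0XX: "x0 \<in> XX" and ws: "winning_strategy \<delta> U f XX Om \<kappa> x0"
    using x0 unfolding Win_def by blast
  have kU: "\<forall>x. \<kappa> x \<subseteq> U"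
    and runok: "\<forall>xs k. prefix_run \<delta> f \<kappa> x0 xs k \<longrightarrow> xs k \<in> XX \<and> \<kappa> (xs k) \<noteq> {}"
    and ev: "\<forall>xs. (\<forall>k. prefix_run \<delta> f \<kappa> x0 xs k) \<longrightarrow> (\<exists>N. \<forall>k\<ge>N. xs k \<in> Om)"
    using ws unfolding winning_strategy_def by blast+
  obtain Xs m where Xs0: "Xs 0 = X0" and Xm: "\<forall>j\<ge>m. Xs j = Ys"
    and Xd: "\<forall>j. Xs (Suc j) \<subseteq> Xs j \<and> (\<forall>p\<in>Xs j - Xs (Suc j). rej U F eps XX p (Xs j))"
    using ch unfolding chain_def by blast
  have dec: "Xs (j + k) \<subseteq> Xs j" for j k
  proof (induction k)
    case 0 then show ?case by simp
  next
    case (Suc k) then show ?case using Xd[rule_format, of "j + k"] by auto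
  qed
  have YsX: "Ys \<subseteq> Xs j" for j using dec[of j m] Xm by simp
  define rk where "rk p = (LEAST j. p \<notin> Xs j)" for p
  define A where "A p = (if rk p = 0 then Ys else Xs (rk p - 1))" for p
  have rkI: "p \<notin> Xs (rk p)" if "p \<notin> Ys" for p
  proof -
    have "p \<notin> Xs m" using that Xm by simp
    then show ?thesis unfolding rk_def by (rule LeastI)
  qed
  have rk0: "p \<notin> Om" if "p \<notin> Ys" "rk p = 0" for p
    using rkI[OF that(1)] that(2) Xs0 X0 by auto
  have E: "rej U F eps XX p (A p) \<and> Ys \<subseteq> A p \<and> (\<forall>y. y \<notin> A p \<longrightarrow> rk p > 0 \<longrightarrow> rk y < rk p)"
    if pX: "p \<in> XX" and pY: "p \<notin> Ys" for p
  proof (cases "rk p")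
    case 0
    then have "p \<in> S1 - Ys" using rk0[OF pY] pX pY S1 by auto
    then show ?thesis using rejS 0 unfolding A_def by auto
  next
    case (Suc j)
    have "p \<in> Xs j" using not_less_Least[of j "\<lambda>j. p \<notin> Xs j"] Suc unfolding rk_def by auto
    moreover have "p \<notin> Xs (Suc j)" using rkI[OF pY] Suc by simp
    ultimately have "rej U F eps XX p (Xs j)" using Xd by blast
    moreover have "rk y < rk p" if "y \<notin> Xs j" for y
    proof -
      have "rk y \<le> j" unfolding rk_def by (rule Least_le) (rule that)
      then show ?thesis using Suc by simp
    qed
    ultimately show ?thesis unfolding A_def using Suc YsX by auto
  qed
  define nxt where "nxt p = (SOME y. (\<exists>u\<in>\<kappa> p. infnorm (y - f u p) \<le> \<delta>) \<and> y \<notin> A p)" for p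
  define xs where "xs k = (nxt ^^ k) x0" for k
  have inv: "prefix_run \<delta> f \<kappa> x0 xs k \<and> xs k \<notin> Ys" for k
  proof (induction k)
    case 0 then show ?case using nx unfolding prefix_run_def xs_def by simp
  next
    case (Suc k)
    have pr: "prefix_run \<delta> f \<kappa> x0 xs k" and pY: "xs k \<notin> Ys" using Suc by auto
    have pX: "xs k \<in> XX" and kne: "\<kappa> (xs k) \<noteq> {}" using runok pr by auto
    obtain u where u: "u \<in> \<kappa> (xs k)" using kne by blast
    have uU: "u \<in> U" using u kU by blast
    note Ek = E[OF pX pY]
    obtain y where "infnorm (y - f u (xs k)) \<le> \<delta>" "y \<notin> A (xs k)"
      using esc[OF incl wr rho rd d _ uU] Ek by blast
    then have "\<exists>y. (\<exists>u\<in>\<kappa> (xs k). infnorm (y - f u (xs k)) \<le> \<delta>) \<and> y \<notin> A (xs k)" using u by blast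
    then have nk: "(\<exists>u\<in>\<kappa> (xs k). infnorm (nxt (xs k) - f u (xs k)) \<le> \<delta>) \<and> nxt (xs k) \<notin> A (xs k)"
      unfolding nxt_def by (rule someI_ex)
    have xsS: "xs (Suc k) = nxt (xs k)" unfolding xs_def by simp
    have "prefix_run \<delta> f \<kappa> x0 xs (Suc k)"
      using pr nk xsS unfolding prefix_run_def by (auto simp: less_Suc_eq)
    moreover have "xs (Suc k) \<notin> Ys" using nk xsS Ek by auto
    ultimately show ?case by blast
  qed
  have decr: "rk (xs (Suc k)) < rk (xs k)" if "rk (xs k) > 0" for k
  proof -
    have pr: "prefix_run \<delta> f \<kappa> x0 xs (Suc k)" using inv by blast
    have pX: "xs k \<in> XX" using runok inv by blast
    have "\<exists>u\<in>\<kappa> (xs k). infnorm (xs (Suc k) - f u (xs k)) \<le> \<delta>"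
      using pr unfolding prefix_run_def by blast
    have "xs (Suc k) = nxt (xs k)" unfolding xs_def by simp
    have "\<exists>y. (\<exists>u\<in>\<kappa> (xs k). infnorm (y - f u (xs k)) \<le> \<delta>) \<and> y \<notin> A (xs k)"
    proof -
      have kne: "\<kappa> (xs k) \<noteq> {}" using runok inv by blast
      obtain u where u: "u \<in> \<kappa> (xs k)" using kne by blast
      have uU: "u \<in> U" using u kU by blast
      obtain y where "infnorm (y - f u (xs k)) \<le> \<delta>" "y \<notin> A (xs k)"
        using esc[OF incl wr rho rd d _ uU] E[OF pX] inv by blast
      then show ?thesis using u by blast
    qed
    then have "nxt (xs k) \<notin> A (xs k)" unfolding nxt_def by (rule someI2_ex) blast
    then show ?thesis using E[OF pX] inv that \<open>xs (Suc k) = nxt (xs k)\<close> by auto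
  qed
  obtain N where N: "\<forall>k\<ge>N. xs k \<in> Om" using ev inv by blast
  have reach: "\<forall>k. rk (xs k) = n \<longrightarrow> (\<exists>k'\<ge>k. rk (xs k') = 0)" for n
  proof (induction n rule: less_induct)
    case (less n)
    show ?case
    proof (intro allI impI)
      fix k assume k: "rk (xs k) = n"
      show "\<exists>k'\<ge>k. rk (xs k') = 0"
      proof (cases "n = 0")
        case True then show ?thesis using k by blast
      next
        case False
        then have "rk (xs (Suc k)) < n" using decr[of k] k by simp
        then obtain k' where "k' \<ge> Suc k" "rk (xs k') = 0" using less by blast
        then show ?thesis by (intro exI[of _ k']) simp
      qed
    qed
  qed
  obtain k' where "k' \<ge> N" "rk (xs k') = 0" using reach by blast
  moreover have "xs k' \<notin> Ys" using inv by blast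
  ultimately show False using rk0 N by blast
qed

end




theorem theorem1:
  fixes f :: "'u \<Rightarrow> real^'n \<Rightarrow> real^'n" and U :: "'u set"
    and XX \<Omega> :: "(real^'n) set" and G1 G2 :: "'n box list"
    and F :: "'u \<Rightarrow> 'n box \<Rightarrow> 'n box" and \<delta> \<rho> \<epsilon> :: real
  assumes "finite U"
    and "\<forall>u\<in>U. continuous_on UNIV (f u)"
    and "compact XX" and "compact \<Omega>" and "\<Omega> \<subseteq> XX"
    and "\<forall>B\<in>set G1 \<union> set G2. valid_box B"
    and "boxes_set G1 = closure (XX - \<Omega>)" and "boxes_set G2 = XX \<inter> \<Omega>"
    and "\<delta> \<ge> 0" and "Win \<delta> U f XX \<Omega> \<noteq> {}"
    and "\<rho> > 0"
    and "\<forall>u\<in>U. is_inclusion_fun XX (f u) (F u)"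
    and "\<forall>u\<in>U. \<forall>B. valid_box B \<and> box_set B \<subseteq> XX \<longrightarrow> wid (F u B) \<le> \<rho> * wid B"
    and "\<epsilon> > 0"
  shows "algorithm3 U F \<epsilon> XX G1 G2 \<noteq> None \<and>
         (\<rho> * \<epsilon> \<le> \<delta> \<longrightarrow>
            Win \<delta> U f XX \<Omega> \<subseteq> interval_part (the (algorithm3 U F \<epsilon> XX G1 G2)) \<and>
            interval_part (the (algorithm3 U F \<epsilon> XX G1 G2)) \<subseteq> Win 0 U f XX \<Omega>)"
proof -
  note a = assms
  define R where "R = (ch \<epsilon>)\<^sup>* `` (set G1 \<union> set G2)"
  interpret A: alg U F \<epsilon> XX \<Omega> "closure (XX - \<Omega>)" R
  proof
    show "\<epsilon> > 0" by (rule a(14))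
    show "finite R" unfolding R_def by (rule finite_R[OF a(14)]) simp
    show "valid_box B" if "B \<in> R" for B using R_valid[OF that[unfolded R_def] a(6)] .
    show "fst (bisect B) \<in> R \<and> snd (bisect B) \<in> R" if "B \<in> R" "\<not> wid B < \<epsilon>" for B
      using R_split[OF that[unfolded R_def]] unfolding R_def by blast
    show "\<Omega> \<subseteq> XX" by (rule a(5))
  qed
  have XXne: "XX \<noteq> {}" using a(10) unfolding Win_def by auto
  have inR: "B \<in> R" if "B \<in> set G1 \<union> set G2" for B unfolding R_def using that by blast
  have clXX: "closure (XX - \<Omega>) \<subseteq> XX"
    using closure_minimal[of "XX - \<Omega>" XX] compact_imp_closed[OF a(3)] by blast
  have G1: "\<forall>B\<in>set G1. A.PX B"
  proof
    fix B assume B: "B \<in> set G1"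
    have "box_set B \<subseteq> boxes_set G1" using B unfolding boxes_set_def by auto
    then show "A.PX B" unfolding A.PX_def using inR B a(7) clXX by auto
  qed
  have G2: "\<forall>B\<in>set G2. A.PO B"
  proof
    fix B assume B: "B \<in> set G2"
    have "box_set B \<subseteq> boxes_set G2" using B unfolding boxes_set_def by auto
    then show "A.PO B" unfolding A.PO_def using inR B a(8) by auto
  qed
  obtain Ks where eq: "algorithm3 U F \<epsilon> XX G1 G2 = Some Ks" and sK: "A.sound Ks"
    and rj: "\<forall>p\<in>closure (XX - \<Omega>) - interval_part Ks. rej U F \<epsilon> XX p (interval_part Ks)"
    and chn: "\<exists>X0. \<Omega> \<subseteq> X0 \<and> chain U F \<epsilon> XX X0 (interval_part Ks)"
    using A.algorithm3_spec[OF XXne G1 G2] a(7,8,5) by auto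
  obtain X0 where X0: "\<Omega> \<subseteq> X0" "chain U F \<epsilon> XX X0 (interval_part Ks)" using chn by blast
  have "\<rho> * \<epsilon> \<le> \<delta> \<longrightarrow> Win \<delta> U f XX \<Omega> \<subseteq> interval_part Ks \<and> interval_part Ks \<subseteq> Win 0 U f XX \<Omega>"
  proof
    assume rd: "\<rho> * \<epsilon> \<le> \<delta>"
    show "Win \<delta> U f XX \<Omega> \<subseteq> interval_part Ks \<and> interval_part Ks \<subseteq> Win 0 U f XX \<Omega>"
    proof
      show "Win \<delta> U f XX \<Omega> \<subseteq> interval_part Ks"
      proof
        fix x0 assume "x0 \<in> Win \<delta> U f XX \<Omega>"
        then show "x0 \<in> interval_part Ks"
          using A.completeness[OF a(12) a(13) a(11) rd a(9) rj X0(1) X0(2) closure_subset] by blast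
      qed
      show "interval_part Ks \<subseteq> Win 0 U f XX \<Omega>"
      proof
        fix x0 assume "x0 \<in> interval_part Ks"
        then show "x0 \<in> Win 0 U f XX \<Omega>" by (rule A.soundness[OF sK a(12)])
      qed
    qed
  qed
  then show ?thesis using eq by simp
qed


end
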